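(* Consider the P-SSD algorithm described in the context, executed over an arbitrary, possibly time-varying, sequence of digraphs $\{G_k\}_{k\ge1}$. Then at each iteration $k\in\mathbb{N}$, $\mathcal{R}(C_k^i)\subseteq\mathcal{R}(C_{k-1}^j)$ for all $i\in\{1,\dots,M\}$ and all $j\in\{i\}\cup\mathcal{N}_{\mathrm{in}}^k(i)$.
   Context: Data setting: a map $T:\mathcal{M}\to\mathcal{M}$, $\mathcal{M}\subseteq\mathbb{R}^n$; a dictionary $D(x)=[d_1(x),\dots,d_{N_d}(x)]$ of real-valued functions on $\mathcal{M}$; data matrices $X,Y\in\mathbb{R}^{N\times n}$ whose $i$-th rows $x_i^T,y_i^T$ satisfy $y_i=T(x_i)$; $D(X)\in\mathbb{R}^{N\times N_d}$ is the matrix with rows $D(x_1),\dots,D(x_N)$ (similarly $D(Y)$). Assumption: $D(X)$ and $D(Y)$ have full column rank. There are $M$ agents; agent $i$ holds local dictionary snapshots $D(X_i),D(Y_i)$ (obtained from a subset of the snapshot pairs) such that the union over $i$ of the rows of $[D(X_i),D(Y_i)]$ equals the set of rows of $[D(X),D(Y)]$. There are signature matrices $D(X_s),D(Y_s)$ with full column rank such that the rows of $[D(X_s),D(Y_s)]$ are contained in the rows of $[D(X_i),D(Y_i)]$ for every $i$. SSD algorithm: given $A,B\in\mathbb{R}^{m\times q}$, set $A_1=A$, $B_1=B$, $C=I_q$, and iterate: let $[Z^A_j;Z^B_j]$ be a matrix whose columns form a basis of the null space of $[A_j,B_j]$ (with $Z^A_j$ having as many rows as $A_j$ has columns); if the null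 space is trivial return $0$; if the number of rows of $Z^A_j$ is at most its number of columns, return $C$; otherwise set $C\leftarrow CZ^A_j$, $A_{j+1}=A_jZ^A_j$, $B_{j+1}=B_jZ^A_j$. Its output is denoted $\mathrm{SSD}(A,B)$. P-SSD algorithm: at iteration $k\ge1$ the digraph $G_k$ is used; an edge $(j,i)\in E_k$ means $j$ is an in-neighbor of $i$, and $\mathcal{N}_{\mathrm{in}}^k(i)$ denotes the in-neighbors of $i$ in $G_k$. Each agent $i$ sets $C_0^i=I_{N_d}$, $\mathrm{flag}_0^i=0$, and for $k=1,2,\dots$: receives $C_{k-1}^j$ for $j\in\mathcal{N}_{\mathrm{in}}^k(i)$; sets $D_k^i=\mathrm{basis}\big(\bigcap_{j\in\{i\}\cup\mathcal{N}_{\mathrm{in}}^k(i)}\mathcal{R}(C_{k-1}^j)\big)$; sets $E_k^i=\mathrm{SSD}(D(X_i)D_k^i,D(Y_i)D_k^i)$; if the number of columns of $D_k^iE_k^i$ is strictly less than that of $C_{k-1}^i$, sets $C_k^i=D_k^iE_k^i$ and $\mathrm{flag}_k^i=0$; otherwise sets $C_k^i=C_{k-1}^i$ and $\mathrm{flag}_k^i=1$; then transmits $C_k^i$ to its out-neighbors. Here $\mathrm{basis}(\mathcal{A})$ returns a matrix whose columns form a basis of the subspace $\mathcal{A}$, and returns $0$ if $\mathcal{A}=\{0\}$; the matrix $0$ is regarded as having $0$ columns. $\mathcal{R}(\cdot)$ denotes range space. *)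

theory Defs
  imports "Jordan_Normal_Form.Matrix"
begin

text \<open>Matrices of arbitrary (varying) size are Jordan_Normal_Form matrices of type real mat.
  The "zero matrix with 0 columns" of the paper is a matrix with dim_col = 0.\<close>

definition col_range :: "real mat \<Rightarrow> real vec set" where
  "col_range A = {A *\<^sub>v x | x. x \<in> carrier_vec (dim_col A)}"

definition full_col_rank :: "real mat \<Rightarrow> bool" where
  "full_col_rank A \<longleftrightarrow> inj_on (\<lambda>x. A *\<^sub>v x) (carrier_vec (dim_col A))"

text \<open>Z is a (possible output of) basis(S) for a subspace S of R^n: Z has n rows and its
  columns form a basis of S.  For S = {0} this forces Z to have 0 columns.\<close>
definition is_basis_mat :: "nat \<Rightarrow> real vec set \<Rightarrow> real mat \<Rightarrow> bool" where
  "is_basis_mat n S Z \<longleftrightarrow> dim_row Z = n \<and> col_range Z = S \<and> full_col_rank Z"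

text \<open>Null space of the block matrix [A, B], its vectors split as pairs (upper part, lower part).\<close>
definition null_pair :: "real mat \<Rightarrow> real mat \<Rightarrow> (real vec \<times> real vec) set" where
  "null_pair A B = {(u, v). u \<in> carrier_vec (dim_col A) \<and> v \<in> carrier_vec (dim_col B) \<and>
      A *\<^sub>v u + B *\<^sub>v v = 0\<^sub>v (dim_row A)}"

definition null_basis :: "real mat \<Rightarrow> real mat \<Rightarrow> real mat \<Rightarrow> real mat \<Rightarrow> bool" where
  "null_basis A B ZA ZB \<longleftrightarrow>
     dim_row ZA = dim_col A \<and> dim_row ZB = dim_col B \<and> dim_col ZA = dim_col ZB \<and>
     (\<lambda>x. (ZA *\<^sub>v x, ZB *\<^sub>v x)) ` carrier_vec (dim_col ZA) = null_pair A B \<and>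
     inj_on (\<lambda>x. (ZA *\<^sub>v x, ZB *\<^sub>v x)) (carrier_vec (dim_col ZA))"

text \<open>SSD loop: ssd_loop A B C R means that running the loop from the state (A_j, B_j, C)
  can return R, for some admissible choice of null-space bases.\<close>
inductive ssd_loop :: "real mat \<Rightarrow> real mat \<Rightarrow> real mat \<Rightarrow> real mat \<Rightarrow> bool" where
  trivial: "null_pair A B = {(0\<^sub>v (dim_col A), 0\<^sub>v (dim_col B))} \<Longrightarrow>
      ssd_loop A B C (0\<^sub>m (dim_row C) 0)"
| stop: "null_pair A B \<noteq> {(0\<^sub>v (dim_col A), 0\<^sub>v (dim_col B))} \<Longrightarrow> null_basis A B ZA ZB \<Longrightarrow>
      dim_row ZA \<le> dim_col ZA \<Longrightarrow> ssd_loop A B C C"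
| step: "null_pair A B \<noteq> {(0\<^sub>v (dim_col A), 0\<^sub>v (dim_col B))} \<Longrightarrow> null_basis A B ZA ZB \<Longrightarrow>
      \<not> dim_row ZA \<le> dim_col ZA \<Longrightarrow> ssd_loop (A * ZA) (B * ZA) (C * ZA) R \<Longrightarrow>
      ssd_loop A B C R"

definition SSD_out :: "real mat \<Rightarrow> real mat \<Rightarrow> real mat \<Rightarrow> bool" where
  "SSD_out A B E \<longleftrightarrow> ssd_loop A B (1\<^sub>m (dim_col A)) E"

definition rows_pair :: "real mat \<Rightarrow> real mat \<Rightarrow> (real vec \<times> real vec) set" where
  "rows_pair A B = {(row A r, row B r) | r. r < dim_row A}"

text \<open>Agents are 1..M; Nin k i is the set of in-neighbours of agent i in
  the digraph G_k; C k i is the matrix C_k^i.  At each iteration k \<ge> 1, each agent chooses some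
  basis D_k^i and some SSD output E_k^i (all admissible choices are allowed).  The flags do not
  influence the matrices C and are omitted.\<close>
definition pssd_exec :: "nat \<Rightarrow> nat \<Rightarrow> (nat \<Rightarrow> real mat) \<Rightarrow> (nat \<Rightarrow> real mat) \<Rightarrow>
    (nat \<Rightarrow> nat \<Rightarrow> nat set) \<Rightarrow> (nat \<Rightarrow> nat \<Rightarrow> real mat) \<Rightarrow> bool" where
  "pssd_exec M Nd DXl DYl Nin C \<longleftrightarrow>
     (\<forall>i\<in>{1..M}. C 0 i = 1\<^sub>m Nd) \<and>
     (\<forall>k\<ge>1. \<forall>i\<in>{1..M}. \<exists>Dk Ek.
        is_basis_mat Nd (\<Inter>j\<in>insert i (Nin k i). col_range (C (k - 1) j)) Dk \<and>
        SSD_out (DXl i * Dk) (DYl i * Dk) Ek \<and>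
        C k i = (if dim_col (Dk * Ek) < dim_col (C (k - 1) i) then Dk * Ek else C (k - 1) i))"

end

theory Submission
  imports Defs "Jordan_Normal_Form.Determinant"
begin

lemma fcr_comp:
  assumes X: "full_col_rank X" and Z: "inj_on (\<lambda>x. Z *\<^sub>v x) (carrier_vec (dim_col Z))"
    and d: "dim_row Z = dim_col X"
  shows "full_col_rank (X * Z)"
  unfolding full_col_rank_def
proof (rule inj_onI)
  fix x y assume x: "x \<in> carrier_vec (dim_col (X * Z))" and y: "y \<in> carrier_vec (dim_col (X * Z))"
    and e: "(X * Z) *\<^sub>v x = (X * Z) *\<^sub>v y"
  have Xc: "X \<in> carrier_mat (dim_row X) (dim_col X)" by auto
  have Zc: "Z \<in> carrier_mat (dim_col X) (dim_col Z)" using d by auto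
  have x': "x \<in> carrier_vec (dim_col Z)" and y': "y \<in> carrier_vec (dim_col Z)" using x y by auto
  have "X *\<^sub>v (Z *\<^sub>v x) = X *\<^sub>v (Z *\<^sub>v y)"
    using e assoc_mult_mat_vec[OF Xc Zc x'] assoc_mult_mat_vec[OF Xc Zc y'] by simp
  moreover have "Z *\<^sub>v x \<in> carrier_vec (dim_col X)" "Z *\<^sub>v y \<in> carrier_vec (dim_col X)" using d by (auto intro!: carrier_vecI)
  ultimately have "Z *\<^sub>v x = Z *\<^sub>v y" using X unfolding full_col_rank_def inj_on_def by blast
  then show "x = y" using Z x' y' unfolding inj_on_def by blast
qed

lemma ZA_inj:
  assumes nb: "null_basis A B ZA ZB" and rA: "dim_row A = dim_row B" and B: "full_col_rank B"
  shows "inj_on (\<lambda>x. ZA *\<^sub>v x) (carrier_vec (dim_col ZA))"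
proof (rule inj_onI)
  fix x y assume x: "x \<in> carrier_vec (dim_col ZA)" and y: "y \<in> carrier_vec (dim_col ZA)"
    and e: "ZA *\<^sub>v x = ZA *\<^sub>v y"
  have px: "(ZA *\<^sub>v x, ZB *\<^sub>v x) \<in> null_pair A B" and py: "(ZA *\<^sub>v y, ZB *\<^sub>v y) \<in> null_pair A B"
    using nb x y unfolding null_basis_def by blast+
  have ex: "A *\<^sub>v (ZA *\<^sub>v x) + B *\<^sub>v (ZB *\<^sub>v x) = 0\<^sub>v (dim_row A)"
    and ey: "A *\<^sub>v (ZA *\<^sub>v y) + B *\<^sub>v (ZB *\<^sub>v y) = 0\<^sub>v (dim_row A)"
    using px py unfolding null_pair_def by auto
  have "B *\<^sub>v (ZB *\<^sub>v x) = B *\<^sub>v (ZB *\<^sub>v y)"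
  proof (rule eq_vecI)
    fix i assume i: "i < dim_vec (B *\<^sub>v (ZB *\<^sub>v y))"
    have "(A *\<^sub>v (ZA *\<^sub>v x) + B *\<^sub>v (ZB *\<^sub>v x)) $ i = 0" using ex i rA by simp
    moreover have "(A *\<^sub>v (ZA *\<^sub>v y) + B *\<^sub>v (ZB *\<^sub>v y)) $ i = 0" using ey i rA by simp
    ultimately show "(B *\<^sub>v (ZB *\<^sub>v x)) $ i = (B *\<^sub>v (ZB *\<^sub>v y)) $ i"
      using i rA e by simp
  qed simp
  moreover have "ZB *\<^sub>v x \<in> carrier_vec (dim_col B)" "ZB *\<^sub>v y \<in> carrier_vec (dim_col B)"
    using px py unfolding null_pair_def by auto
  ultimately have "ZB *\<^sub>v x = ZB *\<^sub>v y" using B unfolding full_col_rank_def inj_on_def by blast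
  then show "x = y" using e nb x y unfolding null_basis_def inj_on_def by auto
qed

lemma ssd_inv:
  assumes "ssd_loop A B C R"
  shows "dim_row A = dim_row B \<Longrightarrow> dim_col A = dim_col B \<Longrightarrow> dim_col C = dim_col A \<Longrightarrow>
    full_col_rank C \<Longrightarrow> full_col_rank B \<Longrightarrow> dim_row R = dim_row C \<and> full_col_rank R"
  using assms
proof (induction rule: ssd_loop.induct)
  case (trivial A B C)
  then show ?case unfolding full_col_rank_def by (auto simp: inj_on_def)
next
  case (stop A B ZA ZB C)
  then show ?case by simp
next
  case (step A B ZA ZB C R)
  have zi: "inj_on (\<lambda>x. ZA *\<^sub>v x) (carrier_vec (dim_col ZA))"
    by (rule ZA_inj[OF step.hyps(2) step.prems(1) step.prems(5)])
  have d: "dim_row ZA = dim_col A" using step.hyps(2) unfolding null_basis_def by auto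
  have c1: "full_col_rank (C * ZA)" using fcr_comp[OF step.prems(4) zi] d step.prems(3) by simp
  have c2: "full_col_rank (B * ZA)" using fcr_comp[OF step.prems(5) zi] d step.prems(2) by simp
  have "dim_row R = dim_row (C * ZA) \<and> full_col_rank R"
    by (rule step.IH) (use step.prems c1 c2 in auto)
  then show ?case by simp
qed


lemma inj_rect_False:
  assumes Y: "(Y :: real mat) \<in> carrier_mat m n" and inj: "inj_on (\<lambda>x. Y *\<^sub>v x) (carrier_vec n)"
    and mn: "m < n"
  shows False
proof -
  define Y' where "Y' = mat n n (\<lambda>(i,j). if i < m then Y $$ (i,j) else 0)"
  have Y'c: "Y' \<in> carrier_mat n n" unfolding Y'_def by auto
  have k: "n - 1 < n" using mn by auto
  have eq: "Y' = mat\<^sub>r n n (\<lambda>i. if i = n - 1 then 0\<^sub>v n else row Y' i)"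
    by (rule eq_matI) (use mn in \<open>auto simp: Y'_def\<close>)
  have "det Y' = 0" by (subst eq, rule det_row_0[OF k]) (auto simp: Y'_def)
  then obtain v where v: "v \<in> carrier_vec n" "v \<noteq> 0\<^sub>v n" "Y' *\<^sub>v v = 0\<^sub>v n"
    using det_0_iff_vec_prod_zero[OF Y'c] by auto
  have "Y *\<^sub>v v = Y *\<^sub>v 0\<^sub>v n"
  proof (rule eq_vecI)
    fix i assume i: "i < dim_vec (Y *\<^sub>v 0\<^sub>v n)"
    then have im: "i < m" using Y by auto
    have "(Y' *\<^sub>v v) $ i = 0" using v(3) im mn by simp
    moreover have "(Y' *\<^sub>v v) $ i = (Y *\<^sub>v v) $ i"
      using im mn Y v(1) by (auto simp: Y'_def scalar_prod_def row_def)
    ultimately show "(Y *\<^sub>v v) $ i = (Y *\<^sub>v 0\<^sub>v n) $ i" using im Y by simp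
  qed (use Y in simp)
  then have "v = 0\<^sub>v n" using inj v(1) unfolding inj_on_def by auto
  then show False using v(2) by simp
qed

lemma inj_square_inv:
  assumes Y: "(Y :: real mat) \<in> carrier_mat n n" and inj: "inj_on (\<lambda>x. Y *\<^sub>v x) (carrier_vec n)"
  shows "\<exists>Yi \<in> carrier_mat n n. Y * Yi = 1\<^sub>m n"
proof -
  have "det Y \<noteq> 0"
  proof
    assume "det Y = 0"
    then obtain v where v: "v \<in> carrier_vec n" "v \<noteq> 0\<^sub>v n" "Y *\<^sub>v v = 0\<^sub>v n"
      using det_0_iff_vec_prod_zero[OF Y] by auto
    have z0: "Y *\<^sub>v 0\<^sub>v n = 0\<^sub>v n" by (rule eq_vecI) (use Y in auto)
    have "Y *\<^sub>v v = Y *\<^sub>v 0\<^sub>v n" using v Y z0 by simp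
    then have "v = 0\<^sub>v n" using inj v(1) unfolding inj_on_def by auto
    then show False using v(2) by simp
  qed
  then have "Y \<in> Units (ring_mat TYPE(real) n (undefined::unit))" by (rule det_non_zero_imp_unit[OF Y])
  then show ?thesis unfolding Units_def ring_mat_def by auto
qed

lemma range_back:
  assumes Dc: "D' \<in> carrier_mat N n" and Dinj: "full_col_rank D'"
    and Cc: "C \<in> carrier_mat N m" and sub: "col_range D' \<subseteq> col_range C" and mn: "m \<le> n"
  shows "col_range C \<subseteq> col_range D'"
proof -
  have ex: "\<exists>y. y \<in> carrier_vec m \<and> C *\<^sub>v y = col D' l" if l: "l < n" for l
  proof -
    have "col D' l = D' *\<^sub>v unit_vec n l"
      by (rule eq_vecI) (use Dc l in \<open>auto simp: row_def col_def\<close>)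
    then have "col D' l \<in> col_range D'" unfolding col_range_def using Dc by auto
    then have "col D' l \<in> col_range C" using sub by auto
    then show ?thesis unfolding col_range_def using Cc by auto
  qed
  define y where "y l = (SOME y. y \<in> carrier_vec m \<and> C *\<^sub>v y = col D' l)" for l
  have y: "y l \<in> carrier_vec m" "C *\<^sub>v y l = col D' l" if "l < n" for l
    using someI_ex[OF ex[OF that]] unfolding y_def by auto
  define Y where "Y = mat m n (\<lambda>(i,l). y l $ i)"
  have Yc: "Y \<in> carrier_mat m n" unfolding Y_def by auto
  have colY: "col Y l = y l" if "l < n" for l
    using y(1)[OF that] that by (auto simp: Y_def)
  have CY: "C * Y = D'"
  proof (rule eq_matI)
    fix i l assume i: "i < dim_row D'" and l: "l < dim_col D'"
    have "(C * Y) $$ (i, l) = row C i \<bullet> col Y l" using i l Cc Yc Dc by auto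
    also have "\<dots> = (C *\<^sub>v y l) $ i" using colY l Dc i Cc by auto
    also have "\<dots> = D' $$ (i, l)" using y(2) l i Dc by auto
    finally show "(C * Y) $$ (i, l) = D' $$ (i, l)" .
  qed (use Cc Yc Dc in auto)
  have Yinj: "inj_on (\<lambda>x. Y *\<^sub>v x) (carrier_vec n)"
  proof (rule inj_onI)
    fix a b assume a: "a \<in> carrier_vec n" and b: "b \<in> carrier_vec n" and e: "Y *\<^sub>v a = Y *\<^sub>v b"
    have "D' *\<^sub>v a = D' *\<^sub>v b"
      using e assoc_mult_mat_vec[OF Cc Yc a] assoc_mult_mat_vec[OF Cc Yc b] CY by simp
    then show "a = b" using Dinj a b Dc unfolding full_col_rank_def inj_on_def by auto
  qed
  have "m = n" using inj_rect_False[OF Yc Yinj] mn by force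
  then obtain Yi where Yi: "Yi \<in> carrier_mat n n" "Y * Yi = 1\<^sub>m n"
    using inj_square_inv[of Y n] Yc Yinj by auto
  show ?thesis
  proof
    fix w assume "w \<in> col_range C"
    then obtain z where z: "z \<in> carrier_vec m" "w = C *\<^sub>v z" unfolding col_range_def using Cc by auto
    have "C *\<^sub>v z = C *\<^sub>v ((Y * Yi) *\<^sub>v z)" using Yi z \<open>m = n\<close> by simp
    also have "(Y * Yi) *\<^sub>v z = Y *\<^sub>v (Yi *\<^sub>v z)"
      by (rule assoc_mult_mat_vec) (use Yi z \<open>m = n\<close> Yc in auto)
    also have "C *\<^sub>v (Y *\<^sub>v (Yi *\<^sub>v z)) = (C * Y) *\<^sub>v (Yi *\<^sub>v z)"
      using Yi z \<open>m = n\<close> Cc Yc by (simp add: assoc_mult_mat_vec)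
    also have "\<dots> = D' *\<^sub>v (Yi *\<^sub>v z)" using CY by simp
    finally have "w = D' *\<^sub>v (Yi *\<^sub>v z)" using z by simp
    moreover have "Yi *\<^sub>v z \<in> carrier_vec (dim_col D')" using z Yi Dc \<open>m = n\<close> by auto
    ultimately show "w \<in> col_range D'" unfolding col_range_def by blast
  qed
qed


lemma sig_fcr:
  assumes sub: "rows_pair DXs DYs \<subseteq> rows_pair DXl DYl"
    and d: "dim_row DXs = dim_row DYs" "dim_row DXl = dim_row DYl" "dim_col DYs = dim_col DYl"
    and r: "full_col_rank DYs"
  shows "full_col_rank DYl"
  unfolding full_col_rank_def
proof (rule inj_onI)
  fix x y assume x: "x \<in> carrier_vec (dim_col DYl)" and y: "y \<in> carrier_vec (dim_col DYl)"
    and e: "DYl *\<^sub>v x = DYl *\<^sub>v y"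
  have "DYs *\<^sub>v x = DYs *\<^sub>v y"
  proof (rule eq_vecI)
    fix r assume "r < dim_vec (DYs *\<^sub>v y)"
    then have rr: "r < dim_row DXs" using d by simp
    then have "(row DXs r, row DYs r) \<in> rows_pair DXl DYl" using sub unfolding rows_pair_def by blast
    then obtain r' where r': "r' < dim_row DYl" "row DYs r = row DYl r'"
      unfolding rows_pair_def using d by auto
    have "(DYl *\<^sub>v x) $ r' = (DYl *\<^sub>v y) $ r'" using e by simp
    then show "(DYs *\<^sub>v x) $ r = (DYs *\<^sub>v y) $ r" using r' rr d by simp
  qed simp
  then show "x = y" using r x y d unfolding full_col_rank_def inj_on_def by auto
qed

lemma col_range_mult:
  assumes "dim_row B = dim_col A"
  shows "col_range (A * B) \<subseteq> col_range A"
proof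
  fix w assume "w \<in> col_range (A * B)"
  then obtain x where x: "x \<in> carrier_vec (dim_col B)" "w = (A * B) *\<^sub>v x"
    unfolding col_range_def by auto
  have "(A * B) *\<^sub>v x = A *\<^sub>v (B *\<^sub>v x)"
    by (rule assoc_mult_mat_vec[of _ "dim_row A" "dim_col A" _ "dim_col B"]) (use x assms in auto)
  then have "w = A *\<^sub>v (B *\<^sub>v x)" using x by simp
  moreover have "B *\<^sub>v x \<in> carrier_vec (dim_col A)" using assms by (auto intro!: carrier_vecI)
  ultimately show "w \<in> col_range A" unfolding col_range_def by blast
qed

theorem lemma4p7:
  fixes M Nd :: nat
    and DX DY :: "real mat"
    and DXl DYl :: "nat \<Rightarrow> real mat"
    and DXs DYs :: "real mat"
    and Nin :: "nat \<Rightarrow> nat \<Rightarrow> nat set"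
    and C :: "nat \<Rightarrow> nat \<Rightarrow> real mat"
  assumes dims: "dim_col DX = Nd" "dim_col DY = Nd" "dim_row DX = dim_row DY"
    and rank: "full_col_rank DX" "full_col_rank DY"
    and local_dims: "\<forall>i\<in>{1..M}. dim_col (DXl i) = Nd \<and> dim_col (DYl i) = Nd \<and>
                          dim_row (DXl i) = dim_row (DYl i)"
    and cover: "(\<Union>i\<in>{1..M}. rows_pair (DXl i) (DYl i)) = rows_pair DX DY"
    and sig_dims: "dim_col DXs = Nd" "dim_col DYs = Nd" "dim_row DXs = dim_row DYs"
    and sig_rank: "full_col_rank DXs" "full_col_rank DYs"
    and sig: "\<forall>i\<in>{1..M}. rows_pair DXs DYs \<subseteq> rows_pair (DXl i) (DYl i)"
    and graphs: "\<forall>k i. Nin k i \<subseteq> {1..M}"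
    and exec: "pssd_exec M Nd DXl DYl Nin C"
  shows "\<forall>k\<ge>1. \<forall>i\<in>{1..M}. \<forall>j\<in>insert i (Nin k i).
           col_range (C k i) \<subseteq> col_range (C (k - 1) j)"
proof -
  have ex: "\<exists>Dk Ek.
        is_basis_mat Nd (\<Inter>j\<in>insert i (Nin k i). col_range (C (k - 1) j)) Dk \<and>
        SSD_out (DXl i * Dk) (DYl i * Dk) Ek \<and>
        C k i = (if dim_col (Dk * Ek) < dim_col (C (k - 1) i) then Dk * Ek else C (k - 1) i)"
    if "k \<ge> 1" "i \<in> {1..M}" for k i
    using exec that unfolding pssd_exec_def by blast
  have stepfacts: "dim_row (Dk * Ek) = Nd \<and> full_col_rank (Dk * Ek) \<and>
      col_range (Dk * Ek) \<subseteq> (\<Inter>j\<in>insert i (Nin k i). col_range (C (k - 1) j))"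
    if i: "i \<in> {1..M}" and b: "is_basis_mat Nd (\<Inter>j\<in>insert i (Nin k i). col_range (C (k - 1) j)) Dk"
      and so: "SSD_out (DXl i * Dk) (DYl i * Dk) Ek" for k i Dk Ek
  proof -
    have Dk: "dim_row Dk = Nd" "full_col_rank Dk"
      "col_range Dk = (\<Inter>j\<in>insert i (Nin k i). col_range (C (k - 1) j))"
      using b unfolding is_basis_mat_def by auto
    have ld: "dim_col (DXl i) = Nd" "dim_col (DYl i) = Nd" "dim_row (DXl i) = dim_row (DYl i)"
      using local_dims i by auto
    have fY: "full_col_rank (DYl i)"
      by (rule sig_fcr[OF sig[rule_format, OF i]]) (use sig_dims ld sig_rank in auto)
    have Dkinj: "inj_on (\<lambda>x. Dk *\<^sub>v x) (carrier_vec (dim_col Dk))"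
      using Dk unfolding full_col_rank_def by simp
    have fB: "full_col_rank (DYl i * Dk)" by (rule fcr_comp[OF fY Dkinj]) (use Dk ld in simp)
    have fI: "full_col_rank (1\<^sub>m (dim_col (DXl i * Dk)))"
      unfolding full_col_rank_def by (auto simp: inj_on_def)
    have E: "dim_row Ek = dim_row (1\<^sub>m (dim_col (DXl i * Dk))) \<and> full_col_rank Ek"
      using ssd_inv[OF so[unfolded SSD_out_def]] ld fB fI by auto
    have Einj: "inj_on (\<lambda>x. Ek *\<^sub>v x) (carrier_vec (dim_col Ek))"
      using E unfolding full_col_rank_def by simp
    have "full_col_rank (Dk * Ek)" by (rule fcr_comp[OF Dk(2) Einj]) (use E in simp)
    moreover have "col_range (Dk * Ek) \<subseteq> col_range Dk" by (rule col_range_mult) (use E in simp)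
    ultimately show ?thesis using Dk by simp
  qed
  have rows: "dim_row (C k i) = Nd" if "i \<in> {1..M}" for k i
    using that
  proof (induction k arbitrary: i)
    case 0
    then show ?case using exec unfolding pssd_exec_def by simp
  next
    case (Suc k)
    obtain Dk Ek where o:
      "is_basis_mat Nd (\<Inter>j\<in>insert i (Nin (Suc k) i). col_range (C (Suc k - 1) j)) Dk"
      "SSD_out (DXl i * Dk) (DYl i * Dk) Ek"
      "C (Suc k) i = (if dim_col (Dk * Ek) < dim_col (C (Suc k - 1) i) then Dk * Ek else C (Suc k - 1) i)"
      using ex[of "Suc k" i] Suc.prems by auto
    show ?case using stepfacts[OF Suc.prems o(1) o(2)] o(3) Suc.IH[OF Suc.prems] by simp
  qed
  show ?thesis
  proof (intro allI impI ballI)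
    fix k i j assume k: "k \<ge> 1" and i: "i \<in> {1..M}" and j: "j \<in> insert i (Nin k i)"
    let ?S = "\<Inter>j\<in>insert i (Nin k i). col_range (C (k - 1) j)"
    obtain Dk Ek where o: "is_basis_mat Nd ?S Dk" "SSD_out (DXl i * Dk) (DYl i * Dk) Ek"
      "C k i = (if dim_col (Dk * Ek) < dim_col (C (k - 1) i) then Dk * Ek else C (k - 1) i)"
      using ex[OF k i] by blast
    have sf: "dim_row (Dk * Ek) = Nd" "full_col_rank (Dk * Ek)" "col_range (Dk * Ek) \<subseteq> ?S"
      using stepfacts[OF i o(1) o(2)] by auto
    have Sj: "?S \<subseteq> col_range (C (k - 1) j)" using j by blast
    show "col_range (C k i) \<subseteq> col_range (C (k - 1) j)"
    proof (cases "dim_col (Dk * Ek) < dim_col (C (k - 1) i)")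
      case True
      then have "C k i = Dk * Ek" using o(3) by simp
      then show ?thesis using subset_trans[OF sf(3) Sj] by simp
    next
      case False
      have Dc: "Dk * Ek \<in> carrier_mat Nd (dim_col (Dk * Ek))" using sf by auto
      have Cc: "C (k - 1) i \<in> carrier_mat Nd (dim_col (C (k - 1) i))" using rows[OF i] by auto
      have "col_range (Dk * Ek) \<subseteq> col_range (C (k - 1) i)" using sf(3) by blast
      from range_back[OF Dc sf(2) Cc this] False
      have "col_range (C (k - 1) i) \<subseteq> col_range (Dk * Ek)" by simp
      moreover have "C k i = C (k - 1) i" using o(3) False by simp
      ultimately show ?thesis using subset_trans[OF sf(3) Sj] by auto
    qed
  qed
qed

end
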